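(* Let $0<a<1$, $u=a^{-1}+\sqrt{a^{-2}-1}$, and $\alpha_n=-\frac{u-u^{-1}}{u^{n+2}-u^{-n-2}}$ for $n\ge0$. Then for nonnegative integers $n,r,s$, \[ \mu_{n,r,s}=\begin{cases}1&\text{if } s=n+r,\\[2pt] -\dfrac{(u^n-u^{-n})(u-u^{-1})}{(u^{s+2}-u^{-(s+2)})(u^{r+1}-u^{-(r+1)})}&\text{if } n-1\le s<n+r,\\[2pt] 0&\text{otherwise.}\end{cases} \]
   Context: For a polynomial $f(z)=\sum_{k=0}^n a_kz^k$ of degree $n$, write $\overline{f}(z)=\sum_k\overline{a_k}z^k$ and $f^*(z)=z^n\overline{f}(1/z)$. Given $(\alpha_n)$ with $|\alpha_n|<1$, define monic $\Phi_n$ by $\Phi_0=1$, $\Phi_{n+1}(z)=z\Phi_n(z)-\overline{\alpha_n}\Phi_n^*(z)$. Let $\mathcal{L}$ be the unique linear functional on Laurent polynomials with $\mathcal{L}(1)=1$ and $\mathcal{L}(\Phi_m(z)\overline{\Phi_n}(1/z))=0$ for $m\neq n$; set $\langle f,g\rangle=\mathcal{L}(f(z)\overline{g}(1/z))$ and $\mu_{n,r,s}=\langle\Phi_s(z),z^n\Phi_r(z)\rangle/\langle\Phi_s,\Phi_s\rangle$. *)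

theory Defs
  imports Complex_Main "HOL-Computational_Algebra.Polynomial"
begin

text \<open>f^*(z) = z^(deg f) * conj-coefficients f (1/z)\<close>
definition pstar :: "complex poly \<Rightarrow> complex poly" where
  "pstar p = reflect_poly (map_poly cnj p)"

text \<open>Monic orthogonal polynomials via the Szego recursion
  Phi_{n+1}(z) = z Phi_n(z) - conj(alpha_n) Phi_n^*(z).\<close>
fun Phi :: "(nat \<Rightarrow> complex) \<Rightarrow> nat \<Rightarrow> complex poly" where
  "Phi al 0 = 1"
| "Phi al (Suc n) = pCons 0 (Phi al n) - smult (cnj (al n)) (pstar (Phi al n))"

text \<open>A linear functional L on Laurent polynomials is given by its moments
  c k = L(z^k), k integer. Then <f,g> = L(f(z) conj-g(1/z))
  = sum_i sum_j f_i conj(g_j) c(i-j).\<close>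
definition ip :: "(int \<Rightarrow> complex) \<Rightarrow> complex poly \<Rightarrow> complex poly \<Rightarrow> complex" where
  "ip c f g = (\<Sum>i\<le>degree f. \<Sum>j\<le>degree g.
      coeff f i * cnj (coeff g j) * c (int i - int j))"

definition mu :: "(int \<Rightarrow> complex) \<Rightarrow> (nat \<Rightarrow> complex) \<Rightarrow> nat \<Rightarrow> nat \<Rightarrow> nat \<Rightarrow> complex" where
  "mu c al n r s = ip c (Phi al s) (monom 1 n * Phi al r) / ip c (Phi al s) (Phi al s)"

end

theory Submission
  imports Defs
begin


lemma ip_bound:
  assumes "degree f \<le> N" "degree g \<le> M"
  shows "ip c f g = (\<Sum>i\<le>N. \<Sum>j\<le>M. coeff f i * cnj (coeff g j) * c (int i - int j))"
proof -
  have inner: "(\<Sum>j\<le>degree g. coeff f i * cnj (coeff g j) * c (int i - int j))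
     = (\<Sum>j\<le>M. coeff f i * cnj (coeff g j) * c (int i - int j))" for i
    by (rule sum.mono_neutral_left) (use assms in \<open>auto simp: coeff_eq_0\<close>)
  have "ip c f g = (\<Sum>i\<le>degree f. \<Sum>j\<le>M. coeff f i * cnj (coeff g j) * c (int i - int j))"
    unfolding ip_def using inner by simp
  also have "\<dots> = (\<Sum>i\<le>N. \<Sum>j\<le>M. coeff f i * cnj (coeff g j) * c (int i - int j))"
    by (rule sum.mono_neutral_left) (use assms in \<open>auto simp: coeff_eq_0\<close>)
  finally show ?thesis .
qed

lemma ip_add_left: "ip c (f + g) h = ip c f h + ip c g h"
proof -
  let ?N = "max (degree f) (degree g)"
  have "degree (f+g) \<le> ?N" by (meson degree_add_le max.cobounded1 max.cobounded2)
  then show ?thesis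
    by (simp add: ip_bound[of "f+g" ?N h "degree h"] ip_bound[of f ?N h "degree h"]
        ip_bound[of g ?N h "degree h"] distrib_right sum.distrib)
qed

lemma ip_diff_left: "ip c (f - g) h = ip c f h - ip c g h"
proof -
  let ?N = "max (degree f) (degree g)"
  have "degree (f-g) \<le> ?N" by (meson degree_diff_le max.cobounded1 max.cobounded2)
  then show ?thesis
    by (simp add: ip_bound[of "f-g" ?N h "degree h"] ip_bound[of f ?N h "degree h"]
        ip_bound[of g ?N h "degree h"] left_diff_distrib sum_subtractf)
qed

lemma ip_smult_left: "ip c (smult a f) h = a * ip c f h"
  by (simp add: ip_bound[of "smult a f" "degree f" h "degree h"] ip_bound[of f "degree f" h "degree h"]
        sum_distrib_left mult.assoc degree_smult_le)

lemma ip_add_right: "ip c h (f + g) = ip c h f + ip c h g"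
proof -
  let ?N = "max (degree f) (degree g)"
  have "degree (f+g) \<le> ?N" by (meson degree_add_le max.cobounded1 max.cobounded2)
  then show ?thesis
    by (simp add: ip_bound[of h "degree h" "f+g" ?N] ip_bound[of h "degree h" f ?N]
        ip_bound[of h "degree h" g ?N] distrib_left distrib_right sum.distrib)
qed

lemma ip_diff_right: "ip c h (f - g) = ip c h f - ip c h g"
proof -
  let ?N = "max (degree f) (degree g)"
  have "degree (f-g) \<le> ?N" by (meson degree_diff_le max.cobounded1 max.cobounded2)
  then show ?thesis
    by (simp add: ip_bound[of h "degree h" "f-g" ?N] ip_bound[of h "degree h" f ?N]
        ip_bound[of h "degree h" g ?N] right_diff_distrib left_diff_distrib sum_subtractf)
qed

lemma ip_smult_right: "ip c h (smult a f) = cnj a * ip c h f"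
  by (simp add: ip_bound[of h "degree h" "smult a f" "degree f"] ip_bound[of h "degree h" f "degree f"]
        sum_distrib_left degree_smult_le algebra_simps)

lemma ip_zero_right: "ip c h 0 = 0"
  by (simp add: ip_def)

lemma ip_sum_right: "finite A \<Longrightarrow> ip c h (\<Sum>t\<in>A. g t) = (\<Sum>t\<in>A. ip c h (g t))"
  by (induct A rule: finite_induct) (simp_all add: ip_zero_right ip_add_right)

lemma ip_shift: "ip c (pCons 0 f) (pCons 0 g) = ip c f g"
proof -
  let ?N = "max (degree f) (degree g)"
  have d: "degree (pCons 0 f) \<le> Suc ?N" "degree (pCons 0 g) \<le> Suc ?N"
    using degree_pCons_le[of 0 f] degree_pCons_le[of 0 g] by auto
  show ?thesis
    apply (simp add: ip_bound[OF d] ip_bound[of f ?N g ?N] sum.atMost_Suc_shift del: sum.atMost_Suc)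
    done
qed

definition Rf :: "nat \<Rightarrow> complex poly \<Rightarrow> complex poly" where
  "Rf N f = (\<Sum>i\<le>N. monom (cnj (coeff f (N - i))) i)"

lemma coeff_Rf: "coeff (Rf N f) i = (if i \<le> N then cnj (coeff f (N - i)) else 0)"
  by (auto simp: Rf_def coeff_sum coeff_monom)

lemma degree_Rf: "degree (Rf N f) \<le> N"
  by (rule degree_le) (simp add: coeff_Rf)

lemma ip_refl:
  assumes "degree f \<le> N" "degree g \<le> N"
  shows "ip c (Rf N f) (Rf N g) = ip c g f"
proof -
  have "ip c (Rf N f) (Rf N g) = (\<Sum>i\<le>N. \<Sum>j\<le>N. cnj (coeff f (N - i)) * coeff g (N - j) * c (int i - int j))"
    by (simp add: ip_bound[OF degree_Rf degree_Rf] coeff_Rf)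
  also have "\<dots> = (\<Sum>i\<le>N. \<Sum>j\<le>N. cnj (coeff f i) * coeff g j * c (int j - int i))"
  proof -
    have r: "(\<Sum>i\<le>N. F i) = (\<Sum>i\<le>N. F (N - i))" for F :: "nat \<Rightarrow> complex"
      using sum.atLeastAtMost_rev[of F 0 N] by (simp add: atLeast0AtMost)
    have "(\<Sum>i\<le>N. \<Sum>j\<le>N. cnj (coeff f (N - i)) * coeff g (N - j) * c (int i - int j))
      = (\<Sum>i\<le>N. \<Sum>j\<le>N. cnj (coeff f (N - (N - i))) * coeff g (N - (N - j)) * c (int (N - i) - int (N - j)))"
      by (subst r, subst (2) r) simp
    also have "\<dots> = (\<Sum>i\<le>N. \<Sum>j\<le>N. cnj (coeff f i) * coeff g j * c (int j - int i))"
      by (intro sum.cong refl) (auto simp: of_nat_diff)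
    finally show ?thesis .
  qed
  also have "\<dots> = (\<Sum>j\<le>N. \<Sum>i\<le>N. coeff g j * cnj (coeff f i) * c (int j - int i))"
    by (subst sum.swap) (simp add: mult.commute)
  also have "\<dots> = ip c g f" by (simp add: ip_bound[OF assms(2,1)])
  finally show ?thesis .
qed



definition Sf :: "real \<Rightarrow> nat \<Rightarrow> real" where "Sf u k = u ^ k - 1 / u ^ k"

lemma Sf0[simp]: "Sf u 0 = 0" by (simp add: Sf_def)

lemma Sf_pos: assumes "u > 1" "k \<ge> 1" shows "Sf u k > 0"
proof -
  have "u ^ k > 1" using assms by (simp add: one_less_power)
  then have "1 / u ^ k < 1" by simp
  with \<open>u^k > 1\<close> show ?thesis unfolding Sf_def by linarith
qed

lemma Sf_mono: assumes "u > 1" "k < m" shows "Sf u k < Sf u m"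
proof -
  have "u ^ k < u ^ m" using assms by (simp add: power_strict_increasing)
  moreover have "u ^ k > 0" using assms by simp
  ultimately have "1 / u ^ m < 1 / u ^ k" by (simp add: frac_less2)
  with \<open>u ^ k < u ^ m\<close> show ?thesis by (simp add: Sf_def)
qed

lemma Sf_id: assumes "u \<noteq> 0"
  shows "Sf u a * Sf u (a + d + 1) - Sf u (a + 1) * Sf u (a + d) = - Sf u 1 * Sf u d"
  using assms by (simp add: Sf_def power_add field_simps)

lemma degree_from_coeff:
  assumes "\<And>i. coeff p i = (if i \<le> k then F i else 0)" "F k \<noteq> 0"
  shows "degree p = k"
proof (rule antisym)
  show "degree p \<le> k" by (rule degree_le) (simp add: assms)
  show "k \<le> degree p" by (rule le_degree) (simp add: assms)
qed

lemma coeff_pstar: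
  assumes "degree p = k"
  shows "coeff (pstar p) i = (if i \<le> k then cnj (coeff p (k - i)) else 0)"
proof -
  have "degree (map_poly cnj p) = k" using assms by (simp add: degree_map_poly)
  then show ?thesis by (auto simp: pstar_def coeff_reflect_poly coeff_map_poly)
qed

lemma coeff_Phi:
  assumes u1: "u > 1" and al: "\<forall>k. al k = complex_of_real (- (u - 1 / u) / (u ^ (k + 2) - 1 / u ^ (k + 2)))"
  shows "coeff (Phi al k) i = (if i \<le> k then complex_of_real (Sf u (i+1) / Sf u (k+1)) else 0)"
proof (induction k arbitrary: i)
  case 0
  have "Sf u 1 > 0" using Sf_pos[OF u1] by simp
  then show ?case by (auto simp: coeff_1)
next
  case (Suc k)
  have alk: "al k = complex_of_real (- Sf u 1 / Sf u (k+2))" using al by (simp add: Sf_def)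
  have pos: "Sf u (k+1) > 0" "Sf u (k+2) > 0" using Sf_pos[OF u1] by auto
  have dk: "degree (Phi al k) = k"
    by (rule degree_from_coeff[OF Suc.IH]) (use pos in simp)
  have ps: "coeff (pstar (Phi al k)) j = (if j \<le> k then complex_of_real (Sf u (k - j + 1) / Sf u (k+1)) else 0)" for j
    by (simp add: coeff_pstar[OF dk] Suc.IH)
  have "coeff (Phi al (Suc k)) i = coeff (pCons 0 (Phi al k)) i + complex_of_real (Sf u 1 / Sf u (k+2)) * coeff (pstar (Phi al k)) i"
    by (simp add: alk)
  also have "\<dots> = (if i \<le> Suc k then complex_of_real (Sf u (i+1) / Sf u (Suc k+1)) else 0)"
  proof (cases i)
    case 0
    then show ?thesis using pos by (simp add: ps)
  next
    case (Suc j)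
    show ?thesis
    proof (cases "j \<le> k")
      case True
      then obtain d where kd: "k = j + d" using le_Suc_ex by blast
      have idr: "Sf u (j+1) * Sf u (j + 1 + d + 1) - Sf u (j+1+1) * Sf u (j + 1 + d) = - Sf u 1 * Sf u d"
        by (rule Sf_id) (use u1 in simp)
      have "Sf u (j+1) / Sf u (k+1) + Sf u 1 / Sf u (k+2) * (if Suc j \<le> k then Sf u (k - Suc j + 1) / Sf u (k+1) else 0)
          = Sf u (j+2) / Sf u (k+2)"
      proof -
        have e: "(if Suc j \<le> k then Sf u (k - Suc j + 1) / Sf u (k+1) else 0) = Sf u d / Sf u (k+1)"
          using kd by (cases d) auto
        show ?thesis unfolding e using pos idr kd
          by (simp add: field_simps)
      qed
      note h = arg_cong[OF this, of complex_of_real]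
      have "complex_of_real (Sf u (j+1) / Sf u (k+1)) + complex_of_real (Sf u 1 / Sf u (k+2)) *
          (if Suc j \<le> k then complex_of_real (Sf u (k - Suc j + 1) / Sf u (k+1)) else 0)
          = complex_of_real (Sf u (j+2) / Sf u (k+2))"
        using h by (cases "Suc j \<le> k") simp_all
      then show ?thesis using True Suc by (simp add: ps Suc.IH)
    next
      case False
      then show ?thesis using Suc by (simp add: ps Suc.IH)
    qed
  qed
  finally show ?case by simp
qed



lemma sum_if_shift:
  fixes r s n :: nat
  shows "(\<Sum>j\<le>r. (if s = n + j then F j else 0)) = (if n \<le> s \<and> s \<le> n + r then F (s - n) else (0::real))"
proof (cases "n \<le> s")
  case True
  have "(\<Sum>j\<le>r. (if s = n + j then F j else 0)) = (\<Sum>j\<le>r. (if j = s - n then F j else 0))"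
  proof -
    have "\<And>j. (s = n + j) = (j = s - n)" using True by auto
    then show ?thesis by simp
  qed
  also have "\<dots> = (if n \<le> s \<and> s \<le> n + r then F (s - n) else 0)"
    using True by (auto simp: sum.delta)
  finally show ?thesis .
next
  case False
  then show ?thesis by (intro trans[OF sum.neutral]) auto
qed

context
  fixes u :: real and al :: "nat \<Rightarrow> complex" and c :: "int \<Rightarrow> complex"
  assumes u1: "u > 1"
    and al: "\<forall>k. al k = complex_of_real (- (u - 1 / u) / (u ^ (k + 2) - 1 / u ^ (k + 2)))"
    and orth: "\<forall>m k. m \<noteq> k \<longrightarrow> ip c (Phi al m) (Phi al k) = 0"
begin

lemma cPhi: "coeff (Phi al k) i = (if i \<le> k then complex_of_real (Sf u (i+1) / Sf u (k+1)) else 0)"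
  by (rule coeff_Phi[OF u1 al])

lemma pos: "k \<ge> 1 \<Longrightarrow> Sf u k > 0" by (rule Sf_pos[OF u1])

lemma degPhi: "degree (Phi al k) = k"
  by (rule degree_from_coeff[OF cPhi]) (use pos[of "Suc k"] in simp)

lemma monom_Phi: "monom 1 k = Phi al k - smult (complex_of_real (Sf u k / Sf u (k+1))) (Phi al (k - 1))"
proof (rule poly_eqI)
  fix i
  have p1: "Sf u (k+1) > 0" using pos by simp
  show "coeff (monom 1 k) i = coeff (Phi al k - smult (complex_of_real (Sf u k / Sf u (k+1))) (Phi al (k - 1))) i"
  proof (cases k)
    case 0
    then show ?thesis using p1 by (simp add: cPhi coeff_monom)
  next
    case (Suc k')
    have p2: "Sf u (k'+1) > 0" using pos by simp
    have re: "(if i \<le> k then Sf u (i+1) / Sf u (k+1) else 0) - Sf u k / Sf u (k+1) * (if i \<le> k - 1 then Sf u (i+1) / Sf u (k - 1 + 1) else 0)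
        = (if k = i then 1 else 0)"
    proof (cases "i \<le> k'")
      case True
      then show ?thesis using Suc p1 p2 by (simp add: field_simps)
    next
      case False
      then show ?thesis using Suc p1 p2 by (cases "i = k") auto
    qed
    have e1: "coeff (Phi al k) i = complex_of_real (if i \<le> k then Sf u (i+1) / Sf u (k+1) else 0)"
      by (simp add: cPhi)
    have e2: "coeff (Phi al (k - 1)) i = complex_of_real (if i \<le> k - 1 then Sf u (i+1) / Sf u (k - 1 + 1) else 0)"
      by (simp only: cPhi) simp
    have e3: "coeff (monom 1 k) i = complex_of_real (if k = i then 1 else 0)"
      by (simp add: coeff_monom)
    show ?thesis
      unfolding coeff_diff coeff_smult e1 e2 e3 of_real_mult[symmetric] of_real_diff[symmetric] re ..
  qed
qed

definition h :: "nat \<Rightarrow> complex" where "h s = ip c (Phi al s) (Phi al s)"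

lemma ip_Phi_monom:
  "ip c (Phi al s) (monom 1 k) = (if s = k then h s else 0)
     - (if s + 1 = k then complex_of_real (Sf u k / Sf u (k+1)) * h s else 0)"
proof -
  have "ip c (Phi al s) (monom 1 k) = ip c (Phi al s) (Phi al k)
      - complex_of_real (Sf u k / Sf u (k+1)) * ip c (Phi al s) (Phi al (k - 1))"
    by (subst monom_Phi) (simp add: ip_diff_right ip_smult_right)
  then show ?thesis using orth unfolding h_def by (cases k) (auto simp del: Phi.simps)
qed

lemma ip_Phi_monom_self: "ip c (Phi al k) (monom 1 k) = h k"
  by (simp add: ip_Phi_monom)

lemma h_Suc: "h (Suc k) = complex_of_real (1 - (Sf u 1 / Sf u (k+2))^2) * h k"
proof -
  define \<beta> where "\<beta> = complex_of_real (Sf u 1 / Sf u (k+2))"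
  define P where "P = Phi al k"
  define Q where "Q = pstar P"
  have dP: "degree P = k" unfolding P_def by (rule degPhi)
  have alk: "al k = complex_of_real (- Sf u 1 / Sf u (k+2))" using al by (simp add: Sf_def)
  have cal: "cnj (al k) = - \<beta>" by (simp add: alk \<beta>_def)
  have rec: "Phi al (Suc k) = pCons 0 P + smult \<beta> Q"
    by (simp add: P_def Q_def cal)
  have cb: "cnj \<beta> = \<beta>" by (simp add: \<beta>_def)
  have R1: "Rf (Suc k) (pCons 0 P) = Q"
    by (rule poly_eqI) (auto simp: coeff_Rf Q_def coeff_pstar[OF dP] coeff_pCons Suc_diff_le
        split: nat.split)
  have R2: "Rf (Suc k) 1 = monom 1 (Suc k)"
    by (rule poly_eqI) (auto simp: coeff_Rf coeff_monom coeff_1)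
  have R3: "Rf k (monom 1 k) = 1"
    by (rule poly_eqI) (auto simp: coeff_Rf coeff_monom coeff_1)
  have R4: "Rf k P = Q"
    by (rule poly_eqI) (auto simp: coeff_Rf Q_def coeff_pstar[OF dP])
  have dpc: "degree (pCons 0 P) \<le> Suc k" using degree_pCons_le[of 0 P] dP by simp
  have hk: "ip c P (monom 1 k) = h k" unfolding P_def by (rule ip_Phi_monom_self)
  have a1: "ip c Q (monom 1 (Suc k)) = ip c 1 (pCons 0 P)"
    using ip_refl[OF dpc, of 1 c] by (simp add: R1 R2)
  have a2: "ip c 1 Q = h k"
    using ip_refl[of "monom 1 k" k P c] dP by (simp add: R3 R4 degree_monom_le hk)
  have "0 = ip c (Phi al 0) (Phi al (Suc k))" using orth[rule_format, of 0 "Suc k"] by (simp del: Phi.simps)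
  also have "\<dots> = ip c 1 (pCons 0 P) + \<beta> * ip c 1 Q"
    by (subst rec) (simp add: ip_add_right ip_smult_right cb)
  finally have a3: "ip c 1 (pCons 0 P) = - \<beta> * h k" using a2
    by (simp add: eq_neg_iff_add_eq_0 add.commute)
  have "h (Suc k) = ip c (Phi al (Suc k)) (monom 1 (Suc k))"
    by (rule ip_Phi_monom_self[symmetric])
  also have "\<dots> = ip c (pCons 0 P) (monom 1 (Suc k)) + \<beta> * ip c Q (monom 1 (Suc k))"
    by (subst rec) (simp add: ip_add_left ip_smult_left)
  also have "ip c (pCons 0 P) (monom 1 (Suc k)) = h k"
    by (simp add: monom_Suc ip_shift hk)
  finally have "h (Suc k) = h k - \<beta> * \<beta> * h k" using a1 a3 by simp
  then show ?thesis by (simp add: \<beta>_def power2_eq_square algebra_simps)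
qed

lemma h_nz: assumes "c 0 = 1" shows "h k \<noteq> 0"
proof (induction k)
  case 0
  then show ?case using assms by (simp add: h_def ip_def)
next
  case (Suc k)
  have "Sf u 1 < Sf u (k+2)" by (rule Sf_mono[OF u1]) simp
  moreover have "Sf u 1 > 0" using pos by simp
  ultimately have "Sf u 1 / Sf u (k+2) < 1" "Sf u 1 / Sf u (k+2) > 0" by auto
  then have "(Sf u 1 / Sf u (k+2))^2 < 1" by (simp add: power_less_one_iff)
  then have "1 - (Sf u 1 / Sf u (k+2))^2 \<noteq> 0" by simp
  then have nz: "complex_of_real (1 - (Sf u 1 / Sf u (k+2))^2) \<noteq> 0" by (simp only: of_real_eq_0_iff not_False_eq_True)
  show ?case unfolding h_Suc mult_eq_0_iff using nz Suc.IH by blast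
qed


lemma ip_main:
  "ip c (Phi al s) (monom 1 n * Phi al r) = complex_of_real
     (\<Sum>j\<le>r. Sf u (j+1) / Sf u (r+1) * ((if s = n + j then 1 else 0)
        - (if s + 1 = n + j then Sf u (n+j) / Sf u (n+j+1) else 0))) * h s"
proof -
  have "monom 1 n * Phi al r = monom 1 n * (\<Sum>j\<le>r. monom (coeff (Phi al r) j) j)"
    using poly_as_sum_of_monoms[of "Phi al r"] degPhi[of r] by simp
  also have "\<dots> = (\<Sum>j\<le>r. smult (coeff (Phi al r) j) (monom 1 (n+j)))"
    by (simp add: sum_distrib_left mult_monom smult_monom)
  finally have e: "monom 1 n * Phi al r = (\<Sum>j\<le>r. smult (coeff (Phi al r) j) (monom 1 (n+j)))" .
  have "ip c (Phi al s) (monom 1 n * Phi al r)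
      = (\<Sum>j\<le>r. cnj (coeff (Phi al r) j) * ip c (Phi al s) (monom 1 (n+j)))"
    unfolding e by (simp add: ip_sum_right ip_smult_right)
  also have "\<dots> = (\<Sum>j\<le>r. complex_of_real (Sf u (j+1) / Sf u (r+1) * ((if s = n + j then 1 else 0)
        - (if s + 1 = n + j then Sf u (n+j) / Sf u (n+j+1) else 0))) * h s)"
  proof (intro sum.cong refl)
    fix j assume "j \<in> {..r}"
    then have cj: "cnj (coeff (Phi al r) j) = complex_of_real (Sf u (j+1) / Sf u (r+1))"
      by (simp add: cPhi)
    show "cnj (coeff (Phi al r) j) * ip c (Phi al s) (monom 1 (n+j)) = complex_of_real (Sf u (j+1) / Sf u (r+1) * ((if s = n + j then 1 else 0)
        - (if s + 1 = n + j then Sf u (n+j) / Sf u (n+j+1) else 0))) * h s"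
      unfolding cj ip_Phi_monom by (auto simp: algebra_simps)
  qed
  also have "\<dots> = complex_of_real
     (\<Sum>j\<le>r. Sf u (j+1) / Sf u (r+1) * ((if s = n + j then 1 else 0)
        - (if s + 1 = n + j then Sf u (n+j) / Sf u (n+j+1) else 0))) * h s"
    by (simp only: of_real_sum sum_distrib_right)
  finally show ?thesis .
qed

lemma h_nz': "c 0 = 1 \<Longrightarrow> ip c (Phi al k) (Phi al k) \<noteq> 0"
  using h_nz unfolding h_def by blast

lemma ip_main':
  "ip c (Phi al s) (monom 1 n * Phi al r) = complex_of_real
     (\<Sum>j\<le>r. Sf u (j+1) / Sf u (r+1) * ((if s = n + j then 1 else 0)
        - (if s + 1 = n + j then Sf u (n+j) / Sf u (n+j+1) else 0))) * ip c (Phi al s) (Phi al s)"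
  using ip_main unfolding h_def by blast

end

lemma T_eval:
  fixes u :: real and n r s :: nat
  assumes u1: "u > 1"
  shows "(\<Sum>j\<le>r. Sf u (j+1) / Sf u (r+1) * ((if s = n + j then 1 else 0)
        - (if s + 1 = n + j then Sf u (n+j) / Sf u (n+j+1) else 0)))
    = (if s = n + r then 1
     else if int n - 1 \<le> int s \<and> s < n + r then
       - (Sf u n * Sf u 1) / (Sf u (s + 2) * Sf u (r + 1))
     else 0)"
proof -
  define A where "A j = Sf u (j+1) / Sf u (r+1)" for j
  have "(\<Sum>j\<le>r. Sf u (j+1) / Sf u (r+1) * ((if s = n + j then 1 else 0)
        - (if s + 1 = n + j then Sf u (n+j) / Sf u (n+j+1) else 0)))
      = (\<Sum>j\<le>r. (if s = n + j then A j else 0)) - (\<Sum>j\<le>r. (if s + 1 = n + j then A j * (Sf u (n+j) / Sf u (n+j+1)) else 0))"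
    unfolding sum_subtractf[symmetric] by (intro sum.cong refl) (auto simp: A_def)
  also have "\<dots> = (if n \<le> s \<and> s \<le> n + r then A (s - n) else 0)
      - (if n \<le> s + 1 \<and> s + 1 \<le> n + r then A (s + 1 - n) * (Sf u (n + (s+1-n)) / Sf u (n + (s+1-n) + 1)) else 0)"
    by (simp only: sum_if_shift)
  also have "\<dots> = (if s = n + r then 1
     else if int n - 1 \<le> int s \<and> s < n + r then
       - (Sf u n * Sf u 1) / (Sf u (s + 2) * Sf u (r + 1))
     else 0)"
  proof -
    have pos: "k \<ge> 1 \<Longrightarrow> Sf u k > 0" for k by (rule Sf_pos[OF u1])
    have pr: "Sf u (r+1) > 0" using pos by simp
    consider "s = n + r" | "n \<le> s" "s < n + r" | "s + 1 = n" | "s + 1 < n" | "s > n + r" by linarith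
    then show ?thesis
    proof cases
      case 1
      then show ?thesis using pr by (simp add: A_def)
    next
      case 2
      then obtain d where sd: "s = n + d" using le_Suc_ex by blast
      have id: "Sf u (d+1) * Sf u (d+1 + n + 1) - Sf u (d+1+1) * Sf u (d+1+n) = - Sf u 1 * Sf u n"
        by (rule Sf_id) (use u1 in simp)
      have ps: "Sf u (s+2) > 0" using pos by simp
      have key: "Sf u (d+1) * Sf u (s+2) - Sf u (d+2) * Sf u (s+1) = - (Sf u n * Sf u 1)"
        using id sd by (simp add: algebra_simps)
      have "A d - A (d+1) * (Sf u (s+1) / Sf u (s+2))
          = (Sf u (d+1) * Sf u (s+2) - Sf u (d+2) * Sf u (s+1)) / (Sf u (s+2) * Sf u (r+1))"
        unfolding A_def using pr ps by (simp add: field_simps)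
      also have "\<dots> = - (Sf u n * Sf u 1) / (Sf u (s + 2) * Sf u (r + 1))"
        by (simp only: key)
      finally have "A d - A (d+1) * (Sf u (s+1) / Sf u (s+2)) = - (Sf u n * Sf u 1) / (Sf u (s + 2) * Sf u (r + 1))" .
      moreover have "s + 1 - n = d + 1" "n + (d+1) = s + 1" using sd by auto
      ultimately show ?thesis using 2 sd by auto
    next
      case 3
      have ps: "Sf u n > 0" "Sf u (n+1) > 0" using pos 3 by auto
      have "s + 2 = n + 1" using 3 by simp
      then show ?thesis using 3 pr ps by (auto simp: A_def field_simps)
    next
      case 4
      then show ?thesis by auto
    next
      case 5
      then show ?thesis by auto
    qed
  qed
  finally show ?thesis .
qed


theorem proposition4p11:
  fixes a u :: real and al :: "nat \<Rightarrow> complex" and c :: "int \<Rightarrow> complex"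
    and n r s :: nat
  assumes "0 < a" and "a < 1"
    and "u = 1 / a + sqrt (1 / a ^ 2 - 1)"
    and "\<forall>k. al k = complex_of_real (- (u - 1 / u) / (u ^ (k + 2) - 1 / u ^ (k + 2)))"
    and "c 0 = 1"
    and "\<forall>m k. m \<noteq> k \<longrightarrow> ip c (Phi al m) (Phi al k) = 0"
  shows "mu c al n r s =
    (if s = n + r then 1
     else if int n - 1 \<le> int s \<and> s < n + r then
       complex_of_real (- ((u ^ n - 1 / u ^ n) * (u - 1 / u)) /
         ((u ^ (s + 2) - 1 / u ^ (s + 2)) * (u ^ (r + 1) - 1 / u ^ (r + 1))))
     else 0)"
proof -
  have "1 / a > 1" using assms(1,2) by simp
  moreover have "sqrt (1 / a ^ 2 - 1) \<ge> 0"
  proof -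
    have "a ^ 2 < 1" using assms(1,2) by (simp add: power_less_one_iff)
    moreover have "a ^ 2 > 0" using assms(1) by simp
    ultimately have "1 \<le> 1 / a ^ 2" by (simp add: field_simps)
    then show ?thesis by simp
  qed
  ultimately have u1: "u > 1" using assms(3) by linarith
  note al = assms(4) and orth = assms(6)
  define T where "T = (\<Sum>j\<le>r. Sf u (j+1) / Sf u (r+1) * ((if s = n + j then 1 else 0)
        - (if s + 1 = n + j then Sf u (n+j) / Sf u (n+j+1) else 0)))"
  have hnz: "ip c (Phi al s) (Phi al s) \<noteq> 0"
    by (rule h_nz'[OF u1 al orth assms(5)])
  have "ip c (Phi al s) (monom 1 n * Phi al r) = complex_of_real T * ip c (Phi al s) (Phi al s)"
    unfolding T_def by (rule ip_main'[OF u1 al orth])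
  then have "mu c al n r s = complex_of_real T"
    using hnz by (simp add: mu_def)
  also have "T = (if s = n + r then 1
     else if int n - 1 \<le> int s \<and> s < n + r then
       - (Sf u n * Sf u 1) / (Sf u (s + 2) * Sf u (r + 1))
     else 0)" unfolding T_def by (rule T_eval[OF u1])
  finally show ?thesis by (simp add: Sf_def)
qed

end
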